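(* Let $W$ be an affine Weyl group, $w\in W$, $i\in D_R(w)$, and let $r_1,\dots,r_n$ be reflections with $H_{r_t}=H_{\alpha,c+t}$ for some root $\alpha$ and $c\in\mathbb{Z}$, such that for all $1\le t\le n$, $$\ell(r_t\cdots r_1ws_i)=\ell(r_{t-1}\cdots r_1ws_i)+1\quad\text{and}\quad r_t\cdots r_1ws_i\neq r_{t-1}\cdots r_1w.$$ Then $i\notin D_R(r_n\cdots r_1ws_i)$.
   Context: $W$ is the affine Weyl group of a crystallographic root system $\Phi$, a Coxeter group with simple generators $s_i$; $H_{\beta,k}=\{v:\langle v,\beta\rangle=k\}$ and reflections of $W$ are the reflections in these hyperplanes; $H_r$ denotes the hyperplane of the reflection $r$. $\ell$ is length and $D_R(w)=\{i:\ell(ws_i)<\ell(w)\}$ is the right descent set. *)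

theory Defs
  imports "HOL-Analysis.Analysis"
begin

definition root_system :: "'a::euclidean_space set \<Rightarrow> bool" where
  "root_system \<Phi> \<longleftrightarrow> finite \<Phi> \<and> 0 \<notin> \<Phi> \<and> span \<Phi> = UNIV
     \<and> (\<forall>\<alpha>\<in>\<Phi>. \<forall>\<beta>\<in>\<Phi>. \<beta> - (2 * (\<beta> \<bullet> \<alpha>) / (\<alpha> \<bullet> \<alpha>)) *\<^sub>R \<alpha> \<in> \<Phi>)
     \<and> (\<forall>\<alpha>\<in>\<Phi>. \<forall>\<beta>\<in>\<Phi>. 2 * (\<beta> \<bullet> \<alpha>) / (\<alpha> \<bullet> \<alpha>) \<in> \<int>)
     \<and> (\<forall>\<alpha>\<in>\<Phi>. \<forall>c::real. c *\<^sub>R \<alpha> \<in> \<Phi> \<longrightarrow> c = 1 \<or> c = -1)"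

definition hyp :: "'a::euclidean_space \<Rightarrow> real \<Rightarrow> 'a set" where
  "hyp \<beta> k = {v. v \<bullet> \<beta> = k}"

definition aff_refl :: "'a::euclidean_space \<Rightarrow> real \<Rightarrow> 'a \<Rightarrow> 'a" where
  "aff_refl \<beta> k x = x - ((x \<bullet> \<beta> - k) * (2 / (\<beta> \<bullet> \<beta>))) *\<^sub>R \<beta>"

inductive_set affW :: "'a::euclidean_space set \<Rightarrow> ('a \<Rightarrow> 'a) set" for \<Phi> where
  affW_id: "id \<in> affW \<Phi>"
| affW_step: "\<beta> \<in> \<Phi> \<Longrightarrow> x \<in> affW \<Phi> \<Longrightarrow> aff_refl \<beta> (of_int k) \<circ> x \<in> affW \<Phi>"

text \<open>A point not lying on any hyperplane H_{beta,k}; its alcove serves as fundamental alcove.\<close>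
definition generic :: "'a::euclidean_space set \<Rightarrow> 'a \<Rightarrow> bool" where
  "generic \<Phi> p \<longleftrightarrow> (\<forall>\<beta>\<in>\<Phi>. \<forall>k::int. p \<notin> hyp \<beta> (of_int k))"

definition is_wall :: "'a::euclidean_space set \<Rightarrow> 'a \<Rightarrow> 'a \<Rightarrow> int \<Rightarrow> bool" where
  "is_wall \<Phi> p \<beta> k \<longleftrightarrow> (\<exists>x. x \<in> hyp \<beta> (of_int k) \<and>
     (\<forall>\<gamma>\<in>\<Phi>. \<forall>m::int. hyp \<gamma> (of_int m) \<noteq> hyp \<beta> (of_int k) \<longrightarrow>
        (x \<bullet> \<gamma> - of_int m) * (p \<bullet> \<gamma> - of_int m) > 0))"

definition simple_refls :: "'a::euclidean_space set \<Rightarrow> 'a \<Rightarrow> ('a \<Rightarrow> 'a) set" where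
  "simple_refls \<Phi> p = {aff_refl \<beta> (of_int k) | \<beta> k. \<beta> \<in> \<Phi> \<and> is_wall \<Phi> p \<beta> k}"

definition len :: "'a::euclidean_space set \<Rightarrow> 'a \<Rightarrow> ('a \<Rightarrow> 'a) \<Rightarrow> nat" where
  "len \<Phi> p w = (LEAST n. \<exists>ws. length ws = n \<and> set ws \<subseteq> simple_refls \<Phi> p \<and> w = foldr (\<circ>) ws id)"

text \<open>Right descent set (indexed by the simple generators themselves).\<close>
definition rdesc :: "'a::euclidean_space set \<Rightarrow> 'a \<Rightarrow> ('a \<Rightarrow> 'a) \<Rightarrow> ('a \<Rightarrow> 'a) set" where
  "rdesc \<Phi> p w = {s \<in> simple_refls \<Phi> p. len \<Phi> p (w \<circ> s) < len \<Phi> p w}"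

fun rprod :: "(nat \<Rightarrow> 'b \<Rightarrow> 'b) \<Rightarrow> nat \<Rightarrow> 'b \<Rightarrow> 'b" where
  "rprod r 0 = id"
| "rprod r (Suc t) = r (Suc t) \<circ> rprod r t"

end

theory Submission
  imports Defs
begin



definition sval :: "'a::euclidean_space \<Rightarrow> int \<Rightarrow> 'a \<Rightarrow> real" where
  "sval g m v = v \<bullet> g - of_int m"

abbreviation sig :: "'a::euclidean_space \<Rightarrow> int \<Rightarrow> 'a \<Rightarrow> 'a" where
  "sig b k \<equiv> aff_refl b (of_int k)"

lemma hyp_lambda:
  fixes g g' :: "'a::euclidean_space"
  assumes "g \<noteq> 0" "g' \<noteq> 0" "hyp g a = hyp g' b"
  shows "\<exists>l. l \<noteq> 0 \<and> g' = l *\<^sub>R g \<and> b = l * a"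
proof -
  have gg: "g \<bullet> g > 0" using assms(1) by simp
  define x0 where "x0 = (a / (g \<bullet> g)) *\<^sub>R g"
  have x0: "x0 \<in> hyp g a" using gg by (simp add: x0_def hyp_def)
  hence "x0 \<in> hyp g' b" using assms(3) by simp
  hence x0b: "x0 \<bullet> g' = b" by (simp add: hyp_def)
  have perp: "v \<bullet> g' = 0" if "v \<bullet> g = 0" for v
  proof -
    have "x0 + v \<in> hyp g a" using x0 that by (simp add: hyp_def inner_add_left)
    hence "x0 + v \<in> hyp g' b" using assms(3) by simp
    hence "(x0 + v) \<bullet> g' = b" by (simp add: hyp_def)
    thus ?thesis using x0b by (simp add: inner_add_left)
  qed
  define l where "l = (g' \<bullet> g) / (g \<bullet> g)"
  define w where "w = g' - l *\<^sub>R g"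
  have "w \<bullet> g = 0" using gg by (simp add: w_def l_def inner_diff_left)
  hence "w \<bullet> g' = 0" by (rule perp)
  hence "w \<bullet> w = 0" using \<open>w \<bullet> g = 0\<close> by (simp add: w_def inner_diff_right)
  hence "w = 0" by simp
  hence g': "g' = l *\<^sub>R g" by (simp add: w_def)
  have "l \<noteq> 0" using assms(2) g' by auto
  moreover have "b = l * a" using x0b g' gg by (simp add: x0_def)
  ultimately show ?thesis using g' by blast
qed

lemma aff_refl_cong:
  fixes g g' :: "'a::euclidean_space"
  assumes "g \<noteq> 0" "g' \<noteq> 0" "hyp g a = hyp g' b"
  shows "aff_refl g a = aff_refl g' b"
proof -
  obtain l where l: "l \<noteq> 0" "g' = l *\<^sub>R g" "b = l * a" using hyp_lambda[OF assms] by blast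
  show ?thesis
  proof
    fix x
    have "((x \<bullet> g' - b) * (2 / (g' \<bullet> g'))) *\<^sub>R g' = ((x \<bullet> g - a) * (2 / (g \<bullet> g))) *\<^sub>R g"
      using l assms(1) by (simp add: field_simps power2_eq_square)
    thus "aff_refl g a x = aff_refl g' b x" by (simp add: aff_refl_def)
  qed
qed

lemma sval_sig_self: "g \<noteq> 0 \<Longrightarrow> sval g m (sig g m v) = - sval g m v"
  by (simp add: sval_def aff_refl_def inner_diff_left field_simps)

lemma sig_invol: "g \<noteq> 0 \<Longrightarrow> sig g m (sig g m v) = v"
proof -
  assume g: "g \<noteq> 0"
  have "sig g m (sig g m v) = sig g m v - (sval g m (sig g m v) * (2 / (g \<bullet> g))) *\<^sub>R g"
    by (simp add: aff_refl_def sval_def)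
  also have "\<dots> = v" using g by (simp add: sval_sig_self) (simp add: aff_refl_def sval_def algebra_simps)
  finally show ?thesis .
qed

lemma sig_comp_invol: "g \<noteq> 0 \<Longrightarrow> sig g m \<circ> sig g m = id"
  by (auto simp: sig_invol)




locale AW =
  fixes \<Phi> :: "'a::euclidean_space set"
  assumes RS: "root_system \<Phi>"
begin

lemma root_nz: "g \<in> \<Phi> \<Longrightarrow> g \<noteq> 0"
  using RS unfolding root_system_def by auto

lemma finPhi: "finite \<Phi>" using RS unfolding root_system_def by auto

lemma refl_data:
  assumes b: "b \<in> \<Phi>" and g: "g \<in> \<Phi>"
  shows "\<exists>g' m'. g' \<in> \<Phi> \<and> (\<forall>v. sval g m (sig b k v) = sval g' m' v)
            \<and> (\<forall>x. sig b k (sig g m (sig b k x)) = sig g' m' x)"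
proof -
  have bnz: "b \<noteq> 0" using root_nz b by blast
  hence bb: "b \<bullet> b > 0" by simp
  define c where "c = 2 * (g \<bullet> b) / (b \<bullet> b)"
  have "c \<in> \<int>" using RS b g unfolding root_system_def c_def by blast
  then obtain ci where ci: "c = of_int ci" by (auto elim: Ints_cases)
  define g' where "g' = g - c *\<^sub>R b"
  have g'Phi: "g' \<in> \<Phi>" using RS b g unfolding root_system_def g'_def c_def by blast
  have cbb: "c * (b \<bullet> b) = 2 * (g \<bullet> b)" using bb by (simp add: c_def)
  have sv: "sval g m (sig b k v) = sval g' (m - k * ci) v" for v
  proof -
    have e1: "sig b k v \<bullet> g = v \<bullet> g - ((v \<bullet> b - of_int k) * (2 / (b \<bullet> b))) * (b \<bullet> g)"
      by (simp add: aff_refl_def inner_diff_left)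
    have e2: "((v \<bullet> b - of_int k) * (2 / (b \<bullet> b))) * (b \<bullet> g) = (v \<bullet> b - of_int k) * c"
      by (simp add: c_def inner_commute)
    have "sval g m (sig b k v) = v \<bullet> g - (v \<bullet> b - of_int k) * c - of_int m"
      using e1 e2 by (simp add: sval_def)
    also have "\<dots> = sval g' (m - k * ci) v"
      by (simp add: sval_def g'_def ci inner_diff_right algebra_simps)
    finally show ?thesis .
  qed
  have g'g': "g' \<bullet> g' = g \<bullet> g"
  proof -
    have "g' \<bullet> g' = g \<bullet> g - 2 * c * (g \<bullet> b) + c * (c * (b \<bullet> b))"
      by (simp add: g'_def inner_diff_left inner_diff_right inner_commute algebra_simps)
    also have "\<dots> = g \<bullet> g" using cbb by (simp add: algebra_simps)
    finally show ?thesis .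
  qed
  have lin: "sig b k (y - t *\<^sub>R g) = sig b k y - t *\<^sub>R g'" for y t
  proof -
    have f: "((y - t *\<^sub>R g) \<bullet> b - of_int k) * (2 / (b \<bullet> b)) = (y \<bullet> b - of_int k) * (2 / (b \<bullet> b)) - t * c"
      using bb by (simp add: inner_diff_left c_def field_simps)
    have "sig b k (y - t *\<^sub>R g) = (y - t *\<^sub>R g) - ((y \<bullet> b - of_int k) * (2 / (b \<bullet> b)) - t * c) *\<^sub>R b"
      by (simp only: aff_refl_def f)
    also have "\<dots> = sig b k y - t *\<^sub>R g'" by (simp add: aff_refl_def g'_def algebra_simps)
    finally show ?thesis .
  qed
  have conj: "sig b k (sig g m (sig b k x)) = sig g' (m - k * ci) x" for x
  proof -
    define y where "y = sig b k x"
    have "sig g m y = y - (sval g m y * (2 / (g \<bullet> g))) *\<^sub>R g" by (simp add: aff_refl_def sval_def)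
    hence "sig b k (sig g m y) = sig b k y - (sval g m y * (2 / (g \<bullet> g))) *\<^sub>R g'" by (simp add: lin)
    also have "sig b k y = x" using sig_invol[OF bnz] y_def by simp
    also have "sval g m y = sval g' (m - k * ci) x" using sv y_def by simp
    finally show ?thesis using g'g' by (simp add: y_def aff_refl_def sval_def)
  qed
  show ?thesis using g'Phi sv conj by blast
qed

definition HS :: "'a set set" where
  "HS = {hyp g (of_int m) | g m. g \<in> \<Phi>}"

lemma hyp_sval: "hyp g (of_int m) = {v. sval g m v = 0}"
  by (auto simp: hyp_def sval_def)

lemma hyp_lambda_sval:
  assumes "g \<in> \<Phi>" "g' \<in> \<Phi>" "hyp g (of_int m) = hyp g' (of_int m')"
  shows "\<exists>l. l \<noteq> 0 \<and> (\<forall>v. sval g' m' v = l * sval g m v)"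
proof -
  obtain l where "l \<noteq> 0" "g' = l *\<^sub>R g" "of_int m' = l * of_int m"
    using hyp_lambda[OF root_nz[OF assms(1)] root_nz[OF assms(2)] assms(3)] by blast
  thus ?thesis by (auto simp: sval_def algebra_simps)
qed

lemma prod_pos_iff:
  assumes "g \<in> \<Phi>" "g' \<in> \<Phi>" "hyp g (of_int m) = hyp g' (of_int m')"
  shows "(sval g' m' a * sval g' m' b > 0) = (sval g m a * sval g m b > 0)"
    and "(sval g' m' a * sval g' m' b < 0) = (sval g m a * sval g m b < 0)"
proof -
  obtain l where l: "l \<noteq> 0" "\<And>v. sval g' m' v = l * sval g m v" using hyp_lambda_sval[OF assms] by blast
  have ll: "l * l > 0" by (metis l(1) not_real_square_gt_zero)
  have e: "sval g' m' a * sval g' m' b = (l * l) * (sval g m a * sval g m b)" using l(2) by simp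
  show "(sval g' m' a * sval g' m' b > 0) = (sval g m a * sval g m b > 0)"
    unfolding e using ll zero_less_mult_pos zero_less_mult_iff by (metis mult_pos_pos)
  show "(sval g' m' a * sval g' m' b < 0) = (sval g m a * sval g m b < 0)"
    unfolding e using ll by (simp add: mult_less_0_iff)
qed

definition sep :: "'a \<Rightarrow> 'a \<Rightarrow> 'a set set" where
  "sep a b = {H. \<exists>g m. g \<in> \<Phi> \<and> H = hyp g (of_int m) \<and> sval g m a * sval g m b < 0}"

lemma sep_iff:
  assumes "g \<in> \<Phi>"
  shows "hyp g (of_int m) \<in> sep a b \<longleftrightarrow> sval g m a * sval g m b < 0"
proof
  assume "hyp g (of_int m) \<in> sep a b"
  then obtain g' m' where g': "g' \<in> \<Phi>" "hyp g (of_int m) = hyp g' (of_int m')"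
     "sval g' m' a * sval g' m' b < 0" unfolding sep_def by blast
  thus "sval g m a * sval g m b < 0" using prod_pos_iff(2)[OF assms g'(1) g'(2)] by simp
next
  assume "sval g m a * sval g m b < 0"
  thus "hyp g (of_int m) \<in> sep a b" using assms unfolding sep_def by blast
qed

lemma sep_HS: "sep a b \<subseteq> HS"
  unfolding sep_def HS_def by blast

lemma sep_sym: "sep a b = sep b a"
  unfolding sep_def by (auto simp: mult.commute)

lemma sep_self: "sep a a = {}"
  unfolding sep_def by (auto simp: mult_less_0_iff)

lemma HS_cases: "H \<in> HS \<Longrightarrow> (\<And>g m. g \<in> \<Phi> \<Longrightarrow> H = hyp g (of_int m) \<Longrightarrow> P) \<Longrightarrow> P"
  unfolding HS_def by blast

lemma generic_sval: "generic \<Phi> a \<Longrightarrow> g \<in> \<Phi> \<Longrightarrow> sval g m a \<noteq> 0"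
  unfolding generic_def by (auto simp: hyp_def sval_def)

lemma sep_trans:
  assumes "generic \<Phi> a" "generic \<Phi> b" "generic \<Phi> c"
  shows "sep a c = (sep a b - sep b c) \<union> (sep b c - sep a b)"
proof (intro set_eqI)
  fix H
  show "H \<in> sep a c \<longleftrightarrow> H \<in> (sep a b - sep b c) \<union> (sep b c - sep a b)"
  proof (cases "H \<in> HS")
    case False thus ?thesis using sep_HS by blast
  next
    case True
    then obtain g m where g: "g \<in> \<Phi>" "H = hyp g (of_int m)" by (rule HS_cases)
    have "sval g m a \<noteq> 0" "sval g m b \<noteq> 0" "sval g m c \<noteq> 0" using assms g generic_sval by auto
    thus ?thesis unfolding g(2) by (simp only: sep_iff[OF g(1)] Un_iff Diff_iff) (auto simp: mult_less_0_iff)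
  qed
qed

end



lemma image_invol: "(\<And>x. f (f x) = x) \<Longrightarrow> f ` A = {x. f x \<in> A}"
  by (auto, metis image_eqI)

context AW begin

lemma sig_image_hyp:
  assumes "b \<in> \<Phi>" "g \<in> \<Phi>"
  shows "\<exists>g' m'. g' \<in> \<Phi> \<and> sig b k ` hyp g (of_int m) = hyp g' (of_int m')
           \<and> (\<forall>v. sval g m (sig b k v) = sval g' m' v)
           \<and> (\<forall>x. sig b k (sig g m (sig b k x)) = sig g' m' x)"
proof -
  obtain g' m' where d: "g' \<in> \<Phi>" "\<forall>v. sval g m (sig b k v) = sval g' m' v"
     "\<forall>x. sig b k (sig g m (sig b k x)) = sig g' m' x"
    using refl_data[OF assms] by blast
  have "sig b k ` hyp g (of_int m) = {x. sig b k x \<in> hyp g (of_int m)}"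
    by (rule image_invol) (simp add: sig_invol root_nz assms)
  also have "\<dots> = hyp g' (of_int m')" using d(2) by (simp add: hyp_sval)
  finally show ?thesis using d by blast
qed

lemma sig_HS:
  assumes b: "b \<in> \<Phi>" and H: "H \<in> HS" shows "sig b k ` H \<in> HS"
proof -
  obtain g m where g: "g \<in> \<Phi>" "H = hyp g (of_int m)" using H by (rule HS_cases)
  obtain g' m' where "g' \<in> \<Phi>" "sig b k ` hyp g (of_int m) = hyp g' (of_int m')"
    using sig_image_hyp[OF b g(1)] by blast
  thus ?thesis using g by (auto simp: HS_def)
qed

lemma sig_img_img: "b \<in> \<Phi> \<Longrightarrow> sig b k ` (sig b k ` H) = H"
  by (simp add: image_comp sig_comp_invol root_nz)

lemma sep_sig:
  assumes b: "b \<in> \<Phi>"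
  shows "H \<in> sep (sig b k a1) (sig b k a2) \<longleftrightarrow> sig b k ` H \<in> sep a1 a2"
proof (cases "H \<in> HS")
  case False
  have "sig b k ` H \<notin> HS"
  proof
    assume "sig b k ` H \<in> HS"
    hence "sig b k ` (sig b k ` H) \<in> HS" by (rule sig_HS[OF b])
    thus False using False sig_img_img[OF b] by simp
  qed
  thus ?thesis using False sep_HS by blast
next
  case True
  then obtain g m where g: "g \<in> \<Phi>" "H = hyp g (of_int m)" by (rule HS_cases)
  obtain g' m' where d: "g' \<in> \<Phi>" "sig b k ` hyp g (of_int m) = hyp g' (of_int m')"
           "\<forall>v. sval g m (sig b k v) = sval g' m' v"
    using sig_image_hyp[OF b g(1)] by blast
  show ?thesis unfolding g(2) d(2) sep_iff[OF g(1)] sep_iff[OF d(1)] using d(3) by simp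
qed

lemma sep_sig_img:
  assumes b: "b \<in> \<Phi>"
  shows "sep (sig b k a1) (sig b k a2) = (`) (sig b k) ` sep a1 a2"
proof -
  have "(`) (sig b k) ` sep a1 a2 = {H. sig b k ` H \<in> sep a1 a2}"
    by (rule image_invol) (rule sig_img_img[OF b])
  thus ?thesis using sep_sig[OF b] by auto
qed

lemma generic_sig:
  assumes b: "b \<in> \<Phi>" and a: "generic \<Phi> a"
  shows "generic \<Phi> (sig b k a)"
  unfolding generic_def
proof (intro ballI allI)
  fix g m assume g: "g \<in> \<Phi>"
  obtain g' m' where d: "g' \<in> \<Phi>" "\<forall>v. sval g m (sig b k v) = sval g' m' v"
    using refl_data[OF b g] by blast
  have "sval g' m' a \<noteq> 0" using generic_sval[OF a d(1)] .
  hence "sval g m (sig b k a) \<noteq> 0" using d(2) by simp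
  thus "sig b k a \<notin> hyp g (of_int m)" by (simp add: hyp_sval)
qed

definition rf :: "'a set \<Rightarrow> 'a \<Rightarrow> 'a" where
  "rf H = (SOME f. \<exists>g m. g \<in> \<Phi> \<and> H = hyp g (of_int m) \<and> f = sig g m)"

lemma rf_eq: assumes "g \<in> \<Phi>" shows "rf (hyp g (of_int m)) = sig g m"
proof -
  have ex: "\<exists>f. \<exists>g' m'. g' \<in> \<Phi> \<and> hyp g (of_int m) = hyp g' (of_int m') \<and> f = sig g' m'"
    using assms by blast
  obtain g' m' where "g' \<in> \<Phi>" "hyp g (of_int m) = hyp g' (of_int m')" "rf (hyp g (of_int m)) = sig g' m'"
    using someI_ex[OF ex] unfolding rf_def by blast
  thus ?thesis using aff_refl_cong[OF root_nz[OF assms] root_nz] by metis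
qed

lemma conj_rf:
  assumes b: "b \<in> \<Phi>" and H: "H \<in> HS"
  shows "sig b k \<circ> rf H \<circ> sig b k = rf (sig b k ` H)"
proof -
  obtain g m where g: "g \<in> \<Phi>" "H = hyp g (of_int m)" using H by (rule HS_cases)
  obtain g' m' where d: "g' \<in> \<Phi>" "sig b k ` hyp g (of_int m) = hyp g' (of_int m')"
           "\<forall>x. sig b k (sig g m (sig b k x)) = sig g' m' x"
    using sig_image_hyp[OF b g(1)] by blast
  show ?thesis unfolding g(2) d(2) rf_eq[OF g(1)] rf_eq[OF d(1)] using d(3) by auto
qed

lemma conj_rf': "b \<in> \<Phi> \<Longrightarrow> H \<in> HS \<Longrightarrow> rf (sig b k ` H) \<circ> sig b k = sig b k \<circ> rf H"
  by (simp add: conj_rf[symmetric] comp_assoc sig_comp_invol root_nz)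

definition RF :: "('a \<Rightarrow> 'a) set" where "RF = {sig b k | b k. b \<in> \<Phi>}"

definition prodw :: "('a \<Rightarrow> 'a) list \<Rightarrow> 'a \<Rightarrow> 'a" where "prodw ws = foldr (\<circ>) ws id"

lemma prodw_simps[simp]: "prodw [] = id" "prodw (g # ws) = g \<circ> prodw ws"
  "prodw (ws @ vs) = prodw ws \<circ> prodw vs"
  by (simp_all add: prodw_def) (induct ws, auto)

lemma RF_cases: "f \<in> RF \<Longrightarrow> (\<And>b k. b \<in> \<Phi> \<Longrightarrow> f = sig b k \<Longrightarrow> P) \<Longrightarrow> P"
  unfolding RF_def by blast

lemma generic_prodw: "set ws \<subseteq> RF \<Longrightarrow> generic \<Phi> a \<Longrightarrow> generic \<Phi> (prodw ws a)"
proof (induct ws)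
  case Nil thus ?case by simp
next
  case (Cons g ws)
  hence "generic \<Phi> (prodw ws a)" "g \<in> RF" by auto
  thus ?case by (auto elim!: RF_cases intro: generic_sig)
qed

lemma inj_prodw: "set ws \<subseteq> RF \<Longrightarrow> inj (prodw ws)"
proof (induct ws)
  case Nil thus ?case by simp
next
  case (Cons g ws)
  hence "inj (prodw ws)" "g \<in> RF" by auto
  moreover have "inj g" if "g \<in> RF" using that
    by (auto elim!: RF_cases intro!: inj_on_inverseI[where g = g] simp: sig_invol root_nz)
  ultimately have "inj (g \<circ> prodw ws)" by (auto intro: inj_compose)
  thus ?case by (simp only: prodw_simps)
qed

lemma sep_prodw: "set ws \<subseteq> RF \<Longrightarrow> sep (prodw ws a1) (prodw ws a2) = (`) (prodw ws) ` sep a1 a2"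
proof (induct ws)
  case Nil thus ?case by simp
next
  case (Cons g ws)
  hence IH: "sep (prodw ws a1) (prodw ws a2) = (`) (prodw ws) ` sep a1 a2" and "g \<in> RF" by auto
  from \<open>g \<in> RF\<close> obtain b k where b: "b \<in> \<Phi>" "g = sig b k" by (rule RF_cases)
  have "sep (prodw (g # ws) a1) (prodw (g # ws) a2) = (`) g ` (`) (prodw ws) ` sep a1 a2"
    using sep_sig_img[OF b(1)] IH b(2) by simp
  also have "\<dots> = (`) (prodw (g # ws)) ` sep a1 a2" by (auto simp: image_comp)
  finally show ?case .
qed

lemma finite_sep: "finite (sep a b)"
proof -
  have "sep a b \<subseteq> (\<Union>g\<in>\<Phi>. (\<lambda>m. hyp g (of_int m)) ` {m. of_int m \<ge> min (a \<bullet> g) (b \<bullet> g) \<and> of_int m \<le> max (a \<bullet> g) (b \<bullet> g)})"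
  proof
    fix H assume "H \<in> sep a b"
    then obtain g m where g: "g \<in> \<Phi>" "H = hyp g (of_int m)" "sval g m a * sval g m b < 0"
      unfolding sep_def by blast
    hence "of_int m \<ge> min (a \<bullet> g) (b \<bullet> g) \<and> of_int m \<le> max (a \<bullet> g) (b \<bullet> g)"
      by (auto simp: sval_def mult_less_0_iff)
    thus "H \<in> (\<Union>g\<in>\<Phi>. (\<lambda>m. hyp g (of_int m)) ` {m. of_int m \<ge> min (a \<bullet> g) (b \<bullet> g) \<and> of_int m \<le> max (a \<bullet> g) (b \<bullet> g)})"
      using g by blast
  qed
  moreover have "finite {m::int. of_int m \<ge> (x::real) \<and> of_int m \<le> y}" for x y :: real
  proof -
    have "{m::int. of_int m \<ge> x \<and> of_int m \<le> y} \<subseteq> {\<lceil>x\<rceil>..\<lfloor>y\<rfloor>}"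
      by (auto simp: ceiling_le_iff le_floor_iff)
    thus ?thesis using finite_subset by blast
  qed
  ultimately show ?thesis using finPhi by (meson finite_UN_I finite_imageI finite_subset)
qed

lemma sval_rf: "g \<in> \<Phi> \<Longrightarrow> sval g m (rf (hyp g (of_int m)) v) = - sval g m v"
  by (simp add: rf_eq sval_sig_self root_nz)

end



locale AWp = AW +
  fixes p0 :: 'a
  assumes GP: "generic \<Phi> p0"
begin

abbreviation SR where "SR \<equiv> simple_refls \<Phi> p0"

lemma SR_cases: "f \<in> SR \<Longrightarrow> (\<And>b k. b \<in> \<Phi> \<Longrightarrow> is_wall \<Phi> p0 b k \<Longrightarrow> f = sig b k \<Longrightarrow> P) \<Longrightarrow> P"
  unfolding simple_refls_def by blast

lemma SR_RF: "SR \<subseteq> RF" unfolding simple_refls_def RF_def by blast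

lemma sq_pos: "(x::real) \<noteq> 0 \<Longrightarrow> 0 < x * x"
  by (metis not_real_square_gt_zero)

lemma sig_fix: "sval b k x = 0 \<Longrightarrow> sig b k x = x"
  by (simp add: aff_refl_def sval_def)

lemma sig_img_self: "b \<in> \<Phi> \<Longrightarrow> sig b k ` hyp b (of_int k) = hyp b (of_int k)"
proof -
  assume b: "b \<in> \<Phi>"
  have "sig b k ` hyp b (of_int k) = {x. sig b k x \<in> hyp b (of_int k)}"
    by (rule image_invol) (simp add: sig_invol root_nz b)
  also have "\<dots> = hyp b (of_int k)" by (simp add: hyp_sval sval_sig_self root_nz b)
  finally show ?thesis .
qed

lemma wall_sep:
  assumes b: "b \<in> \<Phi>" and w: "is_wall \<Phi> p0 b k"
  shows "sep p0 (sig b k p0) = {hyp b (of_int k)}"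
proof -
  obtain x where x: "x \<in> hyp b (of_int k)"
    and xw: "\<And>g m. g \<in> \<Phi> \<Longrightarrow> hyp g (of_int m) \<noteq> hyp b (of_int k) \<Longrightarrow> sval g m x * sval g m p0 > 0"
    using w unfolding is_wall_def sval_def by blast
  have sx: "sig b k x = x" using x by (simp add: hyp_sval sig_fix)
  have "hyp b (of_int k) \<in> sep p0 (sig b k p0)"
  proof -
    have "sval b k p0 \<noteq> 0" using generic_sval[OF GP b] .
    thus ?thesis by (simp add: sep_iff[OF b] sval_sig_self root_nz b sq_pos)
  qed
  moreover have "H = hyp b (of_int k)" if H: "H \<in> sep p0 (sig b k p0)" for H
  proof (rule ccontr)
    assume ne: "H \<noteq> hyp b (of_int k)"
    from H obtain g m where g: "g \<in> \<Phi>" "H = hyp g (of_int m)" "sval g m p0 * sval g m (sig b k p0) < 0"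
      unfolding sep_def by blast
    obtain g' m' where d: "g' \<in> \<Phi>" "sig b k ` hyp g (of_int m) = hyp g' (of_int m')"
           "\<forall>v. sval g m (sig b k v) = sval g' m' v"
      using sig_image_hyp[OF b g(1)] by blast
    have "hyp g' (of_int m') \<noteq> hyp b (of_int k)"
    proof
      assume "hyp g' (of_int m') = hyp b (of_int k)"
      hence "sig b k ` (sig b k ` H) = sig b k ` hyp b (of_int k)" using d(2) g(2) by simp
      thus False using ne sig_img_img[OF b] sig_img_self[OF b] by simp
    qed
    hence B: "sval g' m' x * sval g' m' p0 > 0" using xw[OF d(1)] by blast
    have A: "sval g m x * sval g m p0 > 0" using xw[OF g(1)] ne g(2) by blast
    have "sval g m x = sval g' m' x" using d(3) sx by metis
    hence C: "sval g m x * sval g m (sig b k p0) > 0" using B d(3) by simp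
    from A C g(3) show False
      by (auto simp: zero_less_mult_iff mult_less_0_iff)
  qed
  ultimately show ?thesis by blast
qed

definition rep :: "('a \<Rightarrow> 'a) \<Rightarrow> bool" where
  "rep u \<longleftrightarrow> (\<exists>ws. set ws \<subseteq> SR \<and> u = prodw ws)"

abbreviation L where "L \<equiv> len \<Phi> p0"

lemma len_le: "set ws \<subseteq> SR \<Longrightarrow> L (prodw ws) \<le> length ws"
  unfolding len_def prodw_def by (rule Least_le) blast

lemma len_word: "rep u \<Longrightarrow> \<exists>ws. length ws = L u \<and> set ws \<subseteq> SR \<and> u = prodw ws"
  unfolding len_def rep_def prodw_def by (rule LeastI_ex) blast

lemma len_unrep: assumes "\<not> rep u" "\<not> rep v" shows "L u = L v"
proof -
  have "(\<lambda>n. \<exists>ws. length ws = n \<and> set ws \<subseteq> SR \<and> u = foldr (\<circ>) ws id) = (\<lambda>n. False)"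
       "(\<lambda>n. \<exists>ws. length ws = n \<and> set ws \<subseteq> SR \<and> v = foldr (\<circ>) ws id) = (\<lambda>n. False)"
    using assms unfolding rep_def prodw_def by auto
  thus ?thesis unfolding len_def by simp
qed

lemma rep_comp: "rep u \<Longrightarrow> rep v \<Longrightarrow> rep (u \<circ> v)"
  unfolding rep_def by (metis prodw_simps(3) set_append le_sup_iff)

lemma rep_SR: "s \<in> SR \<Longrightarrow> rep s"
  unfolding rep_def by (rule exI[of _ "[s]"]) simp

lemma SR_invol: "s \<in> SR \<Longrightarrow> s \<circ> s = id"
  by (erule SR_cases) (simp add: sig_comp_invol root_nz)

lemma card_symdiff1:
  assumes "finite X"
  shows "card ((X - {K}) \<union> ({K} - X)) = (if K \<in> X then card X - 1 else card X + 1)"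
proof (cases "K \<in> X")
  case True
  hence "(X - {K}) \<union> ({K} - X) = X - {K}" by blast
  thus ?thesis using True assms by simp
next
  case False
  hence "(X - {K}) \<union> ({K} - X) = insert K X" by blast
  thus ?thesis using False assms by simp
qed

lemma card_step:
  assumes ws: "set ws \<subseteq> SR" and s: "s \<in> SR"
  shows "card (sep p0 (prodw ws (s p0))) = card (sep p0 (prodw ws p0)) + 1
       \<or> card (sep p0 (prodw ws p0)) = card (sep p0 (prodw ws (s p0))) + 1"
proof -
  from s obtain b k where b: "b \<in> \<Phi>" "is_wall \<Phi> p0 b k" "s = sig b k" by (rule SR_cases)
  have wsR: "set ws \<subseteq> RF" using ws SR_RF by blast
  let ?u = "prodw ws"
  have gen: "generic \<Phi> (?u p0)" "generic \<Phi> (?u (s p0))"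
    using generic_prodw[OF wsR] GP generic_sig b by auto
  have e: "sep p0 (?u (s p0)) = (sep p0 (?u p0) - sep (?u p0) (?u (s p0))) \<union> (sep (?u p0) (?u (s p0)) - sep p0 (?u p0))"
    using sep_trans[OF GP gen] .
  have "sep (?u p0) (?u (s p0)) = (`) ?u ` {hyp b (of_int k)}"
    using sep_prodw[OF wsR] wall_sep[OF b(1,2)] b(3) by simp
  hence e2: "sep (?u p0) (?u (s p0)) = {?u ` hyp b (of_int k)}" by simp
  have "sep p0 (?u (s p0)) = (sep p0 (?u p0) - {?u ` hyp b (of_int k)}) \<union> ({?u ` hyp b (of_int k)} - sep p0 (?u p0))"
    using e unfolding e2 .
  hence "card (sep p0 (?u (s p0))) = (if ?u ` hyp b (of_int k) \<in> sep p0 (?u p0) then card (sep p0 (?u p0)) - 1 else card (sep p0 (?u p0)) + 1)"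
    using card_symdiff1[OF finite_sep] by simp
  moreover have "?u ` hyp b (of_int k) \<in> sep p0 (?u p0) \<Longrightarrow> card (sep p0 (?u p0)) > 0"
    using finite_sep card_gt_0_iff by blast
  ultimately show ?thesis by (cases "?u ` hyp b (of_int k) \<in> sep p0 (?u p0)") auto
qed

lemma parity: "set ws \<subseteq> SR \<Longrightarrow> even (card (sep p0 (prodw ws p0)) + length ws)"
proof (induct ws rule: rev_induct)
  case Nil thus ?case by (simp add: sep_self)
next
  case (snoc g ws)
  hence ws: "set ws \<subseteq> SR" and g: "g \<in> SR" by auto
  have "prodw (ws @ [g]) p0 = prodw ws (g p0)" by simp
  thus ?case using card_step[OF ws g] snoc(1)[OF ws] by auto
qed

lemma pm1_aux: "(x::nat) \<le> y + 1 \<Longrightarrow> y \<le> x + 1 \<Longrightarrow> odd (y + x) \<Longrightarrow> x = y + 1 \<or> y = x + 1"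
  by presburger

lemma len_pm1:
  assumes u: "rep u" and s: "s \<in> SR"
  shows "L (u \<circ> s) = L u + 1 \<or> L u = L (u \<circ> s) + 1"
proof -
  obtain ws where ws: "length ws = L u" "set ws \<subseteq> SR" "u = prodw ws" using len_word[OF u] by blast
  have us: "rep (u \<circ> s)" using rep_comp[OF u rep_SR[OF s]] .
  obtain vs where vs: "length vs = L (u \<circ> s)" "set vs \<subseteq> SR" "u \<circ> s = prodw vs" using len_word[OF us] by blast
  have "L (u \<circ> s) \<le> L u + 1" using len_le[of "ws @ [s]"] ws s by simp
  moreover have "u = (u \<circ> s) \<circ> s" using SR_invol[OF s] by (simp add: comp_assoc)
  hence "u = prodw (vs @ [s])" using vs(3) by simp
  hence "L u \<le> L (u \<circ> s) + 1" using len_le[of "vs @ [s]"] vs s by simp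
  moreover have "odd (L u + L (u \<circ> s))"
  proof -
    have p1: "even (card (sep p0 (u p0)) + L u)" using parity[OF ws(2)] ws by simp
    have p2: "even (card (sep p0 (u (s p0))) + L (u \<circ> s))"
      using parity[OF vs(2)] vs by (metis comp_apply)
    show ?thesis using card_step[OF ws(2) s] p1 p2 ws(3) by auto
  qed
  ultimately show ?thesis using pm1_aux by blast
qed

definition del :: "nat \<Rightarrow> 'b list \<Rightarrow> 'b list" where "del j xs = take j xs @ drop (Suc j) xs"

lemma exchange:
  "set ws \<subseteq> SR \<Longrightarrow> H \<in> sep p0 (prodw ws p0) \<Longrightarrow> \<exists>j < length ws. rf H \<circ> prodw ws = prodw (del j ws)"
proof (induct ws arbitrary: H)
  case Nil thus ?case by (simp add: sep_self)
next
  case (Cons g ws)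
  hence ws: "set ws \<subseteq> SR" and g: "g \<in> SR" by auto
  from g obtain b k where b: "b \<in> \<Phi>" "is_wall \<Phi> p0 b k" "g = sig b k" by (rule SR_cases)
  have wsR: "set ws \<subseteq> RF" using ws SR_RF by blast
  let ?v = "prodw ws"
  have gen: "generic \<Phi> (g p0)" "generic \<Phi> (g (?v p0))"
    using generic_prodw[OF wsR] GP generic_sig b by auto
  have "H \<in> sep p0 (g (?v p0))" using Cons(3) by simp
  hence "H \<in> (sep p0 (g p0) - sep (g p0) (g (?v p0))) \<union> (sep (g p0) (g (?v p0)) - sep p0 (g p0))"
    using sep_trans[OF GP gen] by blast
  hence cases: "H = hyp b (of_int k) \<or> g ` H \<in> sep p0 (?v p0)"
    using wall_sep[OF b(1,2)] sep_sig[OF b(1)] b(3) by auto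
  show ?case
  proof (cases "H = hyp b (of_int k)")
    case True
    have "rf H \<circ> prodw (g # ws) = prodw (del 0 (g # ws))"
      using True b by (simp add: rf_eq comp_assoc[symmetric] sig_comp_invol root_nz del_def)
    thus ?thesis by blast
  next
    case False
    hence H2: "g ` H \<in> sep p0 (?v p0)" using cases by blast
    then obtain j where j: "j < length ws" "rf (g ` H) \<circ> ?v = prodw (del j ws)"
      using Cons(1)[OF ws] by blast
    have HS: "g ` H \<in> HS" using H2 sep_HS by blast
    have "H = g ` (g ` H)" using sig_img_img[OF b(1)] b(3) by simp
    moreover have "rf (sig b k ` (sig b k ` H)) \<circ> sig b k = sig b k \<circ> rf (sig b k ` H)"
      by (rule conj_rf'[OF b(1)]) (use HS b(3) in simp)
    ultimately have "rf H \<circ> g = g \<circ> rf (g ` H)" using b(3) by simp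
    hence "rf H \<circ> prodw (g # ws) = g \<circ> prodw (del j ws)"
      using j(2) by (simp add: comp_assoc[symmetric]) (simp add: comp_assoc)
    also have "\<dots> = prodw (del (Suc j) (g # ws))" by (simp add: del_def)
    finally have X: "rf H \<circ> prodw (g # ws) = prodw (del (Suc j) (g # ws))" .
    show ?thesis
    proof (intro exI conjI)
      show "Suc j < length (g # ws)" using j(1) by simp
      show "rf H \<circ> prodw (g # ws) = prodw (del (Suc j) (g # ws))" by (rule X)
    qed
  qed
qed

lemma flip:
  assumes H: "H \<in> HS" and a: "generic \<Phi> a" and n: "H \<notin> sep p0 a"
  shows "H \<in> sep p0 (rf H a)"
proof -
  obtain g m where g: "g \<in> \<Phi>" "H = hyp g (of_int m)" using H by (rule HS_cases)
  have "sval g m p0 \<noteq> 0" "sval g m a \<noteq> 0" using generic_sval GP a g by auto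
  thus ?thesis using n unfolding g(2) sep_iff[OF g(1)] sval_rf[OF g(1)]
    by (auto simp: mult_less_0_iff zero_less_mult_iff)
qed

end



lemma same_sign_pert: "\<bar>e\<bar> < \<bar>x::real\<bar> \<Longrightarrow> (x + e) * x > 0"
  by (cases "x > 0") (auto simp: zero_less_mult_iff abs_if split: if_splits)

lemma sval_line: "sval g m (p + t *\<^sub>R (q - p)) = sval g m p + t * ((q - p) \<bullet> g)"
  by (simp add: sval_def inner_add_left inner_diff_left algebra_simps)

context AWp begin

lemma near_same_sign:
  assumes q: "generic \<Phi> q"
  shows "\<exists>\<delta>>0. \<forall>q'. dist q q' < \<delta> \<longrightarrow> (\<forall>g\<in>\<Phi>. \<forall>m. sval g m q' * sval g m q > 0)"
proof -
  define d where "d g = min (q \<bullet> g - of_int \<lfloor>q \<bullet> g\<rfloor>) (of_int \<lfloor>q \<bullet> g\<rfloor> + 1 - q \<bullet> g) / norm g" for g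
  have dpos: "d g > 0" if g: "g \<in> \<Phi>" for g
  proof -
    have "sval g \<lfloor>q \<bullet> g\<rfloor> q \<noteq> 0" using generic_sval[OF q g] .
    hence "q \<bullet> g \<noteq> of_int \<lfloor>q \<bullet> g\<rfloor>" by (simp add: sval_def)
    hence "q \<bullet> g - of_int \<lfloor>q \<bullet> g\<rfloor> > 0" using of_int_floor_le[of "q \<bullet> g"] by linarith
    moreover have "of_int \<lfloor>q \<bullet> g\<rfloor> + 1 - q \<bullet> g > 0" by linarith
    moreover have "norm g > 0" using root_nz[OF g] by simp
    ultimately show ?thesis by (simp add: d_def)
  qed
  have dle: "d g * norm g \<le> \<bar>sval g m q\<bar>" if g: "g \<in> \<Phi>" for g m
  proof -
    have "norm g > 0" using root_nz[OF g] by simp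
    hence "d g * norm g = min (q \<bullet> g - of_int \<lfloor>q \<bullet> g\<rfloor>) (of_int \<lfloor>q \<bullet> g\<rfloor> + 1 - q \<bullet> g)"
      by (simp add: d_def)
    also have "\<dots> \<le> \<bar>sval g m q\<bar>"
    proof (cases "m \<le> \<lfloor>q \<bullet> g\<rfloor>")
      case True
      hence "of_int m \<le> (of_int \<lfloor>q \<bullet> g\<rfloor> :: real)" by linarith
      thus ?thesis using of_int_floor_le[of "q \<bullet> g"] by (simp add: sval_def)
    next
      case False
      hence "of_int m \<ge> (of_int \<lfloor>q \<bullet> g\<rfloor> + 1 :: real)" by linarith
      thus ?thesis using of_int_floor_le[of "q \<bullet> g"] by (simp add: sval_def)
    qed
    finally show ?thesis .
  qed
  define \<delta> where "\<delta> = Min (insert 1 (d ` \<Phi>))"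
  have fin: "finite (insert 1 (d ` \<Phi>))" using finPhi by simp
  have "\<delta> \<in> insert 1 (d ` \<Phi>)" unfolding \<delta>_def using fin by (rule Min_in) simp
  hence dp: "\<delta> > 0" using dpos by auto
  have dl: "\<delta> \<le> d g" if "g \<in> \<Phi>" for g unfolding \<delta>_def using fin that by simp
  have "\<forall>q'. dist q q' < \<delta> \<longrightarrow> (\<forall>g\<in>\<Phi>. \<forall>m. sval g m q' * sval g m q > 0)"
  proof (intro allI impI ballI)
    fix q' g m assume dq: "dist q q' < \<delta>" and g: "g \<in> \<Phi>"
    have ng: "norm g > 0" using root_nz[OF g] by simp
    have "\<bar>(q' - q) \<bullet> g\<bar> \<le> norm (q' - q) * norm g" by (rule Cauchy_Schwarz_ineq2)
    also have "norm (q' - q) = dist q q'" by (simp add: dist_norm norm_minus_commute)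
    also have "dist q q' * norm g < \<delta> * norm g" using dq ng by simp
    also have "\<dots> \<le> d g * norm g" using dl[OF g] ng by simp
    also have "\<dots> \<le> \<bar>sval g m q\<bar>" by (rule dle[OF g])
    finally have "\<bar>(q' - q) \<bullet> g\<bar> < \<bar>sval g m q\<bar>" .
    hence "(sval g m q + (q' - q) \<bullet> g) * sval g m q > 0" by (rule same_sign_pert)
    moreover have "sval g m q' = sval g m q + (q' - q) \<bullet> g" by (simp add: sval_def inner_diff_left)
    ultimately show "sval g m q' * sval g m q > 0" by simp
  qed
  thus ?thesis using dp by blast
qed

definition rg :: "'a set \<Rightarrow> 'a" where "rg H = fst (SOME gm. fst gm \<in> \<Phi> \<and> H = hyp (fst gm) (of_int (snd gm)))"
definition rm :: "'a set \<Rightarrow> int" where "rm H = snd (SOME gm. fst gm \<in> \<Phi> \<and> H = hyp (fst gm) (of_int (snd gm)))"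

lemma rep_spec: assumes "H \<in> HS" shows "rg H \<in> \<Phi> \<and> H = hyp (rg H) (of_int (rm H))"
proof -
  obtain g m where "g \<in> \<Phi>" "H = hyp g (of_int m)" using assms by (rule HS_cases)
  hence "\<exists>gm. fst gm \<in> \<Phi> \<and> H = hyp (fst gm) (of_int (snd gm))" by (intro exI[of _ "(g, m)"]) simp
  from someI_ex[OF this] show ?thesis unfolding rg_def rm_def .
qed

definition av :: "'a set \<Rightarrow> real" where "av H = sval (rg H) (rm H) p0"
definition dvec :: "'a set \<Rightarrow> 'a set \<Rightarrow> 'a" where "dvec H1 H2 = av H2 *\<^sub>R rg H1 - av H1 *\<^sub>R rg H2"

lemma av_nz: "H \<in> HS \<Longrightarrow> av H \<noteq> 0"
  unfolding av_def using generic_sval[OF GP] rep_spec by blast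

lemma dvec_nz:
  assumes H1: "H1 \<in> HS" and H2: "H2 \<in> HS" and ne: "H1 \<noteq> H2"
  shows "dvec H1 H2 \<noteq> 0"
proof
  assume d0: "dvec H1 H2 = 0"
  obtain g1: "rg H1 \<in> \<Phi>" and e1: "H1 = hyp (rg H1) (of_int (rm H1))" using rep_spec[OF H1] by blast
  obtain g2: "rg H2 \<in> \<Phi>" and e2: "H2 = hyp (rg H2) (of_int (rm H2))" using rep_spec[OF H2] by blast
  have a1: "av H1 \<noteq> 0" and a2: "av H2 \<noteq> 0" using av_nz H1 H2 by auto
  define c where "c = av H2 / av H1"
  have c0: "c \<noteq> 0" using a1 a2 by (simp add: c_def)
  have "av H2 *\<^sub>R rg H1 = av H1 *\<^sub>R rg H2" using d0 unfolding dvec_def by simp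
  hence "(1 / av H1) *\<^sub>R (av H2 *\<^sub>R rg H1) = (1 / av H1) *\<^sub>R (av H1 *\<^sub>R rg H2)" by simp
  hence gg: "rg H2 = c *\<^sub>R rg H1" using a1 by (simp add: c_def)
  have mm: "of_int (rm H2) = c * of_int (rm H1)"
  proof -
    have "av H2 = p0 \<bullet> rg H2 - of_int (rm H2)" "av H1 = p0 \<bullet> rg H1 - of_int (rm H1)"
      by (simp_all add: av_def sval_def)
    moreover have "av H2 = c * av H1" using a1 by (simp add: c_def)
    moreover have "p0 \<bullet> rg H2 = c * (p0 \<bullet> rg H1)" using gg by simp
    ultimately show ?thesis by (simp add: algebra_simps)
  qed
  have "H2 = H1"
  proof -
    have "H2 = {v. v \<bullet> (c *\<^sub>R rg H1) = c * of_int (rm H1)}" using e2 gg mm by (simp add: hyp_def)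
    also have "\<dots> = {v. v \<bullet> rg H1 = of_int (rm H1)}" using c0 by auto
    finally show ?thesis using e1 by (simp add: hyp_def)
  qed
  thus False using ne by simp
qed

lemma wall_exists:
  assumes q: "generic \<Phi> q" and ne: "sep p0 q \<noteq> {}"
  shows "\<exists>b\<in>\<Phi>. \<exists>k. is_wall \<Phi> p0 b k \<and> hyp b (of_int k) \<in> sep p0 q"
proof -
  define S where "S = sep p0 q"
  have finS: "finite S" unfolding S_def by (rule finite_sep)
  have SHS: "S \<subseteq> HS" unfolding S_def by (rule sep_HS)
  obtain \<delta> where dp: "\<delta> > 0" and dn: "\<And>q'. dist q q' < \<delta> \<Longrightarrow> \<forall>g\<in>\<Phi>. \<forall>m. sval g m q' * sval g m q > 0"
    using near_same_sign[OF q] by blast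
  define B where "B = \<Union>((\<lambda>(H1, H2). {x. dvec H1 H2 \<bullet> x = dvec H1 H2 \<bullet> p0}) ` {(H1, H2). H1 \<in> S \<and> H2 \<in> S \<and> H1 \<noteq> H2})"
  have negB: "negligible B" unfolding B_def
  proof (rule negligible_Union)
    have "{(H1, H2). H1 \<in> S \<and> H2 \<in> S \<and> H1 \<noteq> H2} \<subseteq> S \<times> S" by blast
    thus "finite ((\<lambda>(H1, H2). {x. dvec H1 H2 \<bullet> x = dvec H1 H2 \<bullet> p0}) ` {(H1, H2). H1 \<in> S \<and> H2 \<in> S \<and> H1 \<noteq> H2})"
      using finS by (meson finite_SigmaI finite_imageI finite_subset)
  next
    fix T assume "T \<in> (\<lambda>(H1, H2). {x. dvec H1 H2 \<bullet> x = dvec H1 H2 \<bullet> p0}) ` {(H1, H2). H1 \<in> S \<and> H2 \<in> S \<and> H1 \<noteq> H2}"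
    then obtain H1 H2 where "H1 \<in> S" "H2 \<in> S" "H1 \<noteq> H2" "T = {x. dvec H1 H2 \<bullet> x = dvec H1 H2 \<bullet> p0}" by auto
    moreover have "dvec H1 H2 \<noteq> 0" using dvec_nz SHS calculation by blast
    ultimately show "negligible T" using negligible_hyperplane by blast
  qed
  have "\<not> ball q \<delta> \<subseteq> B"
  proof
    assume "ball q \<delta> \<subseteq> B"
    hence "negligible (ball q \<delta>)" using negB negligible_subset by blast
    thus False using open_not_negligible[of "ball q \<delta>"] dp by simp
  qed
  then obtain q' where q'b: "dist q q' < \<delta>" and q'B: "q' \<notin> B" by (meson mem_ball subsetI)
  have sgn: "\<And>g m. g \<in> \<Phi> \<Longrightarrow> sval g m q' * sval g m q > 0" using dn[OF q'b] by blast
  have q'gen: "generic \<Phi> q'"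
    unfolding generic_def
  proof (intro ballI allI)
    fix g m assume "g \<in> \<Phi>"
    hence "0 < sval g m q' * sval g m q" using sgn by blast
    hence "sval g m q' \<noteq> 0" by auto
    thus "q' \<notin> hyp g (of_int m)" by (simp add: hyp_sval)
  qed
  have Sq': "S = sep p0 q'"
  proof (intro set_eqI iffI)
    fix H assume "H \<in> S"
    then obtain g m where g: "g \<in> \<Phi>" "H = hyp g (of_int m)" "sval g m p0 * sval g m q < 0"
      unfolding S_def sep_def by blast
    have "sval g m q' * sval g m q > 0" using sgn g(1) by blast
    hence "sval g m p0 * sval g m q' < 0" using g(3) by (auto simp: mult_less_0_iff zero_less_mult_iff)
    thus "H \<in> sep p0 q'" using g sep_iff by blast
  next
    fix H assume "H \<in> sep p0 q'"
    then obtain g m where g: "g \<in> \<Phi>" "H = hyp g (of_int m)" "sval g m p0 * sval g m q' < 0"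
      unfolding sep_def by blast
    have "sval g m q' * sval g m q > 0" using sgn g(1) by blast
    hence "sval g m p0 * sval g m q < 0" using g(3) by (auto simp: mult_less_0_iff zero_less_mult_iff)
    thus "H \<in> S" unfolding S_def using g sep_iff by blast
  qed
  define fv where "fv H = (q' - p0) \<bullet> rg H" for H
  define tt where "tt H = - av H / fv H" for H
  have Sfacts: "fv H \<noteq> 0 \<and> 0 < tt H \<and> tt H < 1 \<and> av H + tt H * fv H = 0" if H: "H \<in> S" for H
  proof -
    have r: "rg H \<in> \<Phi>" "H = hyp (rg H) (of_int (rm H))" using rep_spec SHS H by auto
    have "av H * (av H + fv H) < 0"
    proof -
      have "sval (rg H) (rm H) p0 * sval (rg H) (rm H) q' < 0" using H Sq' r sep_iff by metis
      moreover have "sval (rg H) (rm H) q' = av H + fv H"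
        by (simp add: av_def fv_def sval_def inner_diff_left)
      ultimately show ?thesis by (simp add: av_def)
    qed
    hence f0: "fv H \<noteq> 0" by (auto simp: mult_less_0_iff)
    have "0 < tt H \<and> tt H < 1"
    proof (cases "fv H > 0")
      case True
      hence "av H < 0" "av H + fv H > 0" using \<open>av H * (av H + fv H) < 0\<close>
        by (auto simp: mult_less_0_iff)
      thus ?thesis using True by (simp add: tt_def field_simps)
    next
      case False
      hence fn: "fv H < 0" using f0 by simp
      hence "av H > 0" "av H + fv H < 0" using \<open>av H * (av H + fv H) < 0\<close>
        by (auto simp: mult_less_0_iff)
      thus ?thesis using fn by (simp add: tt_def field_simps)
    qed
    moreover have "av H + tt H * fv H = 0" using f0 by (simp add: tt_def)
    ultimately show ?thesis using f0 by blast
  qed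
  have Sne: "S \<noteq> {}" using ne S_def by simp
  define tmin where "tmin = Min (tt ` S)"
  have "tmin \<in> tt ` S" unfolding tmin_def using finS Sne by (intro Min_in) auto
  then obtain Hs where Hs: "Hs \<in> S" "tt Hs = tmin" by blast
  have tmin_le: "tmin \<le> tt H" if "H \<in> S" for H unfolding tmin_def using finS that by simp
  define b where "b = rg Hs"
  define k where "k = rm Hs"
  have bk: "b \<in> \<Phi>" "Hs = hyp b (of_int k)" using rep_spec SHS Hs(1) by (auto simp: b_def k_def)
  define x where "x = p0 + tmin *\<^sub>R (q' - p0)"
  have svx: "sval g m x = sval g m p0 + tmin * ((q' - p0) \<bullet> g)" for g m
    unfolding x_def by (rule sval_line)
  have tm: "0 < tmin" "tmin < 1" using Sfacts[OF Hs(1)] Hs(2) by auto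
  have xH: "x \<in> hyp b (of_int k)"
    using Sfacts[OF Hs(1)] Hs(2) svx[of b k] by (simp add: hyp_sval av_def fv_def b_def k_def)
  have wall: "is_wall \<Phi> p0 b k"
    unfolding is_wall_def
  proof (intro exI conjI ballI allI impI)
    show "x \<in> hyp b (of_int k)" by (rule xH)
    fix g m assume g: "g \<in> \<Phi>" and neH: "hyp g (of_int m) \<noteq> hyp b (of_int k)"
    show "(x \<bullet> g - of_int m) * (p0 \<bullet> g - of_int m) > 0"
    proof (cases "hyp g (of_int m) \<in> S")
      case False
      hence "\<not> sval g m p0 * sval g m q' < 0" using Sq' sep_iff[OF g] by blast
      moreover have "sval g m p0 \<noteq> 0" "sval g m q' \<noteq> 0" using generic_sval GP q'gen g by auto
      ultimately have pos: "sval g m p0 * sval g m q' > 0"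
        by (auto simp: mult_less_0_iff zero_less_mult_iff)
      have "sval g m x = (1 - tmin) * sval g m p0 + tmin * sval g m q'"
        using svx by (simp add: sval_def inner_diff_left algebra_simps)
      hence "sval g m x * sval g m p0 = ((1 - tmin) * sval g m p0 + tmin * sval g m q') * sval g m p0"
        by simp
      also have "\<dots> = (1 - tmin) * (sval g m p0 * sval g m p0) + tmin * (sval g m p0 * sval g m q')"
        by (simp add: algebra_simps)
      also have "\<dots> > 0"
      proof -
        have "0 < (1 - tmin) * (sval g m p0 * sval g m p0)"
          using tm sq_pos[OF \<open>sval g m p0 \<noteq> 0\<close>] by (metis diff_gt_0_iff_gt mult_pos_pos)
        moreover have "0 < tmin * (sval g m p0 * sval g m q')" using tm pos by (metis diff_gt_0_iff_gt mult_pos_pos)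
        ultimately show ?thesis by simp
      qed
      finally show ?thesis by (simp add: sval_def)
    next
      case True
      define H where "H = hyp g (of_int m)"
      have HS': "H \<in> S" using True H_def by simp
      have r: "rg H \<in> \<Phi>" "H = hyp (rg H) (of_int (rm H))" using rep_spec SHS HS' by auto
      have HneHs: "H \<noteq> Hs" using neH bk H_def by simp
      have "tt H \<noteq> tmin"
      proof
        assume eq: "tt H = tmin"
        have "av H + tmin * fv H = 0" "av Hs + tmin * fv Hs = 0" using Sfacts[OF HS'] Sfacts[OF Hs(1)] eq Hs(2) by auto
        hence "av H = - (tmin * fv H)" "av Hs = - (tmin * fv Hs)" by linarith+
        hence z: "av H * fv Hs - av Hs * fv H = 0" by simp
        have "dvec Hs H \<bullet> (q' - p0) = av H * (rg Hs \<bullet> (q' - p0)) - av Hs * (rg H \<bullet> (q' - p0))"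
          by (simp only: dvec_def inner_diff_left inner_scaleR_left)
        also have "\<dots> = av H * fv Hs - av Hs * fv H" by (simp add: fv_def inner_commute)
        finally have "dvec Hs H \<bullet> (q' - p0) = av H * fv Hs - av Hs * fv H" .
        hence "dvec Hs H \<bullet> (q' - p0) = 0" using z by simp
        hence "dvec Hs H \<bullet> q' = dvec Hs H \<bullet> p0" by (simp add: inner_diff_right)
        hence "q' \<in> B" unfolding B_def using HS' Hs(1) HneHs by blast
        thus False using q'B by simp
      qed
      hence lt: "tmin < tt H" using tmin_le[OF HS'] by simp
      have F: "fv H \<noteq> 0" "0 < tt H" "av H + tt H * fv H = 0" using Sfacts[OF HS'] by auto
      have "sval (rg H) (rm H) x * sval (rg H) (rm H) p0 > 0"
      proof -
        have e: "sval (rg H) (rm H) x = av H + tmin * fv H"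
          using svx by (simp add: av_def fv_def)
        have fv: "fv H = - av H / tt H" using F by (simp add: field_simps)
        have "av H + tmin * fv H = av H * (1 - tmin / tt H)" using F fv by (simp add: field_simps)
        moreover have "1 - tmin / tt H > 0" using lt F by (simp add: field_simps)
        moreover have "av H \<noteq> 0" using av_nz SHS HS' by blast
        ultimately have "sval (rg H) (rm H) x * av H = (av H * av H) * (1 - tmin / tt H)" using e by simp
        also have "\<dots> > 0" using \<open>av H \<noteq> 0\<close> \<open>1 - tmin / tt H > 0\<close> by (simp add: sq_pos)
        finally show ?thesis by (simp add: av_def)
      qed
      hence "sval g m x * sval g m p0 > 0"
        using prod_pos_iff(1)[OF g r(1)] r(2) H_def by metis
      thus ?thesis by (simp add: sval_def)
    qed
  qed
  show ?thesis using wall bk Hs(1) S_def by blast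
qed

end



lemma hyp_subset_eq:
  fixes g g' :: "'a::euclidean_space"
  assumes "g \<noteq> 0" "g' \<noteq> 0" "hyp g a \<subseteq> hyp g' b"
  shows "hyp g a = hyp g' b"
proof -
  have gg: "g \<bullet> g > 0" using assms(1) by simp
  define x0 where "x0 = (a / (g \<bullet> g)) *\<^sub>R g"
  have x0: "x0 \<in> hyp g a" using gg by (simp add: x0_def hyp_def)
  hence "x0 \<in> hyp g' b" using assms(3) by blast
  hence x0b: "x0 \<bullet> g' = b" by (simp add: hyp_def)
  have perp: "v \<bullet> g' = 0" if "v \<bullet> g = 0" for v
  proof -
    have "x0 + v \<in> hyp g a" using x0 that by (simp add: hyp_def inner_add_left)
    hence "x0 + v \<in> hyp g' b" using assms(3) by blast
    hence "(x0 + v) \<bullet> g' = b" by (simp add: hyp_def)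
    thus ?thesis using x0b by (simp add: inner_add_left)
  qed
  define l where "l = (g' \<bullet> g) / (g \<bullet> g)"
  define w where "w = g' - l *\<^sub>R g"
  have "w \<bullet> g = 0" using gg by (simp add: w_def l_def inner_diff_left)
  hence "w \<bullet> g' = 0" by (rule perp)
  hence "w \<bullet> w = 0" using \<open>w \<bullet> g = 0\<close> by (simp add: w_def inner_diff_right)
  hence "w = 0" by simp
  hence g': "g' = l *\<^sub>R g" by (simp add: w_def)
  have l0: "l \<noteq> 0" using assms(2) g' by auto
  have b: "b = l * a" using x0b g' gg by (simp add: x0_def)
  show ?thesis unfolding hyp_def g' b using l0 by auto
qed

context AWp begin

lemma sep_invol_img:
  assumes g: "g \<in> \<Phi>" and K: "K \<in> sep p0 (sig g m p0)"
  shows "sig g m ` K \<in> sep p0 (sig g m p0)"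
proof -
  have "sig g m ` K \<in> sep (sig g m p0) (sig g m (sig g m p0))"
    using sep_sig[OF g] sig_img_img[OF g] K by simp
  thus ?thesis using sig_invol[OF root_nz[OF g]] sep_sym by metis
qed

lemma nofix:
  assumes g: "g \<in> \<Phi>" and b: "b \<in> \<Phi>" and ne: "hyp b (of_int k) \<noteq> hyp g (of_int m)"
    and K: "hyp b (of_int k) \<in> sep p0 (sig g m p0)"
  shows "sig g m ` hyp b (of_int k) \<noteq> hyp b (of_int k)"
proof
  assume fx: "sig g m ` hyp b (of_int k) = hyp b (of_int k)"
  obtain b' k' where d: "b' \<in> \<Phi>" "sig g m ` hyp b (of_int k) = hyp b' (of_int k')"
           "\<forall>v. sval b k (sig g m v) = sval b' k' v"
    using sig_image_hyp[OF g b] by blast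
  obtain l where l: "l \<noteq> 0" "\<And>v. sval b k v = l * sval b' k' v"
  proof -
    have "hyp b' (of_int k') = hyp b (of_int k)" using d(2) fx by simp
    from hyp_lambda_sval[OF d(1) b this] show ?thesis using that by blast
  qed
  have rel: "l * sval b k (sig g m v) = sval b k v" for v using l(2) d(3) by simp
  show False
  proof (cases "l = 1")
    case True
    hence "sval b k (sig g m p0) = sval b k p0" using rel[of p0] by simp
    moreover have "sval b k p0 * sval b k (sig g m p0) < 0" using K sep_iff[OF b] by blast
    ultimately show False by (simp add: mult_less_0_iff)
  next
    case False
    have "hyp g (of_int m) \<subseteq> hyp b (of_int k)"
    proof
      fix v assume v: "v \<in> hyp g (of_int m)"
      hence "sig g m v = v" by (simp add: hyp_sval sig_fix)
      hence "l * sval b k v = sval b k v" using rel[of v] by simp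
      hence "sval b k v = 0" using False by (metis mult_cancel_right2)
      thus "v \<in> hyp b (of_int k)" by (simp add: hyp_sval)
    qed
    hence "hyp g (of_int m) = hyp b (of_int k)" using hyp_subset_eq root_nz g b by blast
    thus False using ne by simp
  qed
qed

lemma rf_rep_aux: "\<forall>H. H \<in> HS \<longrightarrow> card (sep p0 (rf H p0)) = n \<longrightarrow> rep (rf H)"
proof (induct n rule: less_induct)
  case (less n)
  show ?case
  proof (intro allI impI)
    fix H assume H: "H \<in> HS" and cn: "card (sep p0 (rf H p0)) = n"
    obtain g m where g: "g \<in> \<Phi>" "H = hyp g (of_int m)" using H by (rule HS_cases)
    define R where "R = sig g m"
    have RH: "rf H = R" using rf_eq g R_def by simp
    define N where "N = sep p0 (R p0)"
    have Rgen: "generic \<Phi> (R p0)" using generic_sig[OF g(1) GP] R_def by simp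
    have "H \<in> N" using flip[OF H GP] sep_self RH N_def by simp
    hence "N \<noteq> {}" by blast
    then obtain b k where b: "b \<in> \<Phi>" "is_wall \<Phi> p0 b k" and KN: "hyp b (of_int k) \<in> N"
      using wall_exists[OF Rgen] N_def by blast
    define K where "K = hyp b (of_int k)"
    define s where "s = sig b k"
    have sSR: "s \<in> SR" unfolding s_def simple_refls_def using b by blast
    show "rep (rf H)"
    proof (cases "K = H")
      case True
      have "rf K = s" using rf_eq[OF b(1)] K_def s_def by simp
      hence "rf H = s" using True by simp
      thus ?thesis using rep_SR[OF sSR] by simp
    next
      case False
      have KHS: "K \<in> HS" using KN K_def N_def sep_HS by blast
      define H2 where "H2 = s ` H"
      have H2HS: "H2 \<in> HS" using sig_HS[OF b(1) H] H2_def s_def by simp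
      have rf2: "rf H2 = s \<circ> R \<circ> s" using conj_rf[OF b(1) H] RH H2_def s_def by simp
      have ss: "s \<circ> s = id" using sig_comp_invol[OF root_nz[OF b(1)]] s_def by simp
      have RR: "R \<circ> R = id" using sig_comp_invol[OF root_nz[OF g(1)]] R_def by simp
      have RK: "R ` K \<in> N" using sep_invol_img[OF g(1)] KN K_def N_def R_def by simp
      have RKne: "R ` K \<noteq> K" using nofix[OF g(1) b(1)] False KN K_def N_def R_def g(2) by simp
      have sK: "s ` K = K" using sig_img_self[OF b(1)] K_def s_def by simp
      have finN: "finite N" unfolding N_def by (rule finite_sep)
      define a where "a = s p0"
      define c where "c = R a"
      have agen: "generic \<Phi> a" using generic_sig[OF b(1) GP] a_def s_def by simp
      have cgen: "generic \<Phi> c" using generic_sig[OF g(1) agen] c_def R_def by simp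
      have scgen: "generic \<Phi> (s c)" using generic_sig[OF b(1) cgen] s_def by simp
      have e1: "sep p0 (s c) = (sep p0 a - sep a (s c)) \<union> (sep a (s c) - sep p0 a)"
        using sep_trans[OF GP agen scgen] .
      have e2: "sep p0 a = {K}" using wall_sep[OF b] a_def s_def K_def by simp
      have e3: "sep a (s c) = (`) s ` sep p0 c" using sep_sig_img[OF b(1)] a_def s_def by simp
      have e4: "sep p0 c = (N - sep (R p0) c) \<union> (sep (R p0) c - N)"
        using sep_trans[OF GP Rgen cgen] N_def by simp
      have "sep (R p0) (R a) = (`) R ` sep p0 a" using sep_sig_img[OF g(1)] R_def by simp
      hence e5: "sep (R p0) c = {R ` K}" using e2 c_def by simp
      have e6: "sep p0 c = N - {R ` K}" using e4 e5 RK by auto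
      have cN: "card N = n" using cn RH N_def by simp
      have cardc: "card (sep p0 c) = n - 1" using e6 RK finN cN by simp
      have KN': "K \<in> N" using KN K_def by simp
      have Kc: "K \<in> sep p0 c" using e6 KN' RKne by auto
      have ssx: "s (s x) = x" for x using ss by (metis comp_apply id_apply)
      have injs0: "inj s" by (rule injI) (metis ssx)
      have injs: "inj_on ((`) s) (sep p0 c)" by (rule inj_onI) (simp add: inj_image_eq_iff[OF injs0])
      have e7: "sep a (s c) = (`) s ` sep p0 c" by (rule e3)
      have "s ` K \<in> (`) s ` sep p0 c" using Kc by (rule imageI)
      hence Kin: "K \<in> sep a (s c)" using e7 sK by simp
      have "sep p0 (s c) = sep a (s c) - {K}" using e1 Kin unfolding e2 by auto
      hence "card (sep p0 (s c)) = card (sep a (s c)) - 1" using Kin finite_sep by simp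
      also have "card (sep a (s c)) = n - 1" using e7 card_image[OF injs] cardc by simp
      finally have cc: "card (sep p0 (s c)) = n - 1 - 1" .
      have "card (sep p0 c) > 0" using Kc finite_sep card_gt_0_iff by blast
      hence n1: "n \<ge> 1" using cardc by simp
      have "rf H2 p0 = s c" using rf2 a_def c_def by simp
      hence lt: "card (sep p0 (rf H2 p0)) < n" using cc n1 by simp
      have "rep (rf H2)" using less[OF lt] H2HS by blast
      moreover have "rf H = s \<circ> rf H2 \<circ> s"
      proof -
        have "s \<circ> rf H2 \<circ> s = (s \<circ> s) \<circ> R \<circ> (s \<circ> s)" using rf2 by (simp add: comp_assoc)
        thus ?thesis using ss RH by simp
      qed
      ultimately show ?thesis using rep_comp rep_SR[OF sSR] by metis
    qed
  qed
qed

lemma rf_rep: "H \<in> HS \<Longrightarrow> rep (rf H)"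
  using rf_rep_aux by blast

end



context AWp begin

lemma del_len: "j < length xs \<Longrightarrow> length (del j xs) = length xs - 1"
  by (simp add: del_def)

lemma del_set: "set (del j xs) \<subseteq> set xs"
  by (auto simp: del_def dest: in_set_takeD in_set_dropD)

lemma del_last: "del (length ws) (ws @ [s]) = ws"
  by (simp add: del_def)

lemma del_app: "j < length ws \<Longrightarrow> del j (ws @ [s]) = del j ws @ [s]"
  by (simp add: del_def)

lemma step_main:
  assumes x: "rep x" and s: "s \<in> SR" and R: "R = rf Hr" and Hr: "Hr \<in> HS"
    and IH: "L (x \<circ> s) > L x" and Ly: "L (R \<circ> x) = L x + 1" and ne: "R \<circ> x \<noteq> x \<circ> s"
  shows "L (R \<circ> x \<circ> s) > L (R \<circ> x)"
proof (rule ccontr)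
  assume nt: "\<not> ?thesis"
  have Rrep: "rep R" using rf_rep[OF Hr] R by simp
  have yrep: "rep (R \<circ> x)" using rep_comp[OF Rrep x] .
  have Lys: "L (R \<circ> x \<circ> s) = L x" using len_pm1[OF yrep s] nt Ly by simp
  have Lxs: "L (x \<circ> s) = L x + 1" using len_pm1[OF x s] IH by simp
  obtain g m where g: "g \<in> \<Phi>" "Hr = hyp g (of_int m)" using Hr by (rule HS_cases)
  have RR: "R \<circ> R = id" using R g rf_eq sig_comp_invol[OF root_nz[OF g(1)]] by simp
  have ss: "s \<circ> s = id" using SR_invol[OF s] .
  have xsrep: "rep (x \<circ> s)" using rep_comp[OF x rep_SR[OF s]] .
  have xsgen: "generic \<Phi> ((x \<circ> s) p0)"
  proof -
    obtain ws where "set ws \<subseteq> SR" "x \<circ> s = prodw ws" using xsrep unfolding rep_def by blast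
    thus ?thesis using generic_prodw[of ws p0] SR_RF GP by auto
  qed
  show False
  proof (cases "Hr \<in> sep p0 ((x \<circ> s) p0)")
    case False
    hence H1: "Hr \<in> sep p0 ((R \<circ> (x \<circ> s)) p0)" using flip[OF Hr xsgen] R by simp
    have ysrep: "rep (R \<circ> (x \<circ> s))" using rep_comp[OF Rrep xsrep] .
    obtain vs where vs: "length vs = L (R \<circ> (x \<circ> s))" "set vs \<subseteq> SR" "R \<circ> (x \<circ> s) = prodw vs"
      using len_word[OF ysrep] by blast
    obtain j where j: "j < length vs" "rf Hr \<circ> prodw vs = prodw (del j vs)"
      using exchange[OF vs(2)] H1 vs(3) by metis
    have "R \<circ> (R \<circ> (x \<circ> s)) = x \<circ> s" using RR by (simp add: comp_assoc[symmetric])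
    hence "x \<circ> s = prodw (del j vs)" using j(2) vs(3) R by simp
    hence "L (x \<circ> s) \<le> length (del j vs)" using len_le del_set vs(2) by (metis order_trans)
    also have "\<dots> = length vs - 1" using del_len[OF j(1)] .
    finally show False using vs(1) Lys Lxs by (simp add: comp_assoc)
  next
    case True
    obtain ws where ws: "length ws = L x" "set ws \<subseteq> SR" "x = prodw ws" using len_word[OF x] by blast
    have xs: "x \<circ> s = prodw (ws @ [s])" using ws(3) by simp
    have wss: "set (ws @ [s]) \<subseteq> SR" using ws(2) s by simp
    obtain j where j: "j < length (ws @ [s])" "rf Hr \<circ> prodw (ws @ [s]) = prodw (del j (ws @ [s]))"
      using exchange[OF wss] True xs by metis
    show False
    proof (cases "j = length ws")
      case True
      hence "R \<circ> (x \<circ> s) = x" using j(2) xs ws(3) R True by (simp add: del_last)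
      hence "R \<circ> x \<circ> s \<circ> s = x \<circ> s" by (simp add: comp_assoc)
      hence "R \<circ> x = x \<circ> s" using ss by (simp add: comp_assoc)
      thus False using ne by simp
    next
      case False
      hence jl: "j < length ws" using j(1) by simp
      have "R \<circ> (x \<circ> s) = prodw (del j ws) \<circ> s" using j(2) xs R del_app[OF jl] by simp
      hence "R \<circ> x \<circ> s \<circ> s = prodw (del j ws) \<circ> s \<circ> s" by (simp add: comp_assoc)
      hence "R \<circ> x = prodw (del j ws)" using ss by (simp add: comp_assoc)
      hence "L (R \<circ> x) \<le> length (del j ws)" using len_le del_set ws(2) by (metis order_trans)
      also have "\<dots> = length ws - 1" using del_len[OF jl] .
      finally show False using Ly ws(1) by simp
    qed
  qed
qed

end

theorem corollary4p6:
  fixes \<Phi> :: "'a::euclidean_space set" and p0 :: 'a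
    and w s :: "'a \<Rightarrow> 'a" and \<alpha> :: 'a and c :: int and n :: nat
    and r :: "nat \<Rightarrow> 'a \<Rightarrow> 'a"
  assumes "root_system \<Phi>"
    and "generic \<Phi> p0"
    and "w \<in> affW \<Phi>"
    and "s \<in> rdesc \<Phi> p0 w"
    and "\<alpha> \<in> \<Phi>"
    and "\<forall>t\<in>{1..n}. r t = aff_refl \<alpha> (of_int (c + int t))"
    and "\<forall>t\<in>{1..n}. len \<Phi> p0 (rprod r t \<circ> w \<circ> s) = len \<Phi> p0 (rprod r (t - 1) \<circ> w \<circ> s) + 1
                   \<and> rprod r t \<circ> w \<circ> s \<noteq> rprod r (t - 1) \<circ> w"
  shows "s \<notin> rdesc \<Phi> p0 (rprod r n \<circ> w \<circ> s)"
proof -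
  interpret AWp \<Phi> p0 by unfold_locales (use assms(1,2) in auto)
  have sSR: "s \<in> SR" and Lws: "L (w \<circ> s) < L w" using assms(4) unfolding rdesc_def by auto
  have ss: "s \<circ> s = id" using SR_invol[OF sSR] .
  have wrep: "rep w"
  proof (rule ccontr)
    assume nw: "\<not> rep w"
    have "\<not> rep (w \<circ> s)"
    proof
      assume "rep (w \<circ> s)"
      hence "rep (w \<circ> s \<circ> s)" using rep_comp rep_SR[OF sSR] by blast
      thus False using nw ss by (simp add: comp_assoc)
    qed
    hence "L (w \<circ> s) = L w" using len_unrep nw by blast
    thus False using Lws by simp
  qed
  define Hr where "Hr t = hyp \<alpha> (of_int (c + int t))" for t
  have HrHS: "Hr t \<in> HS" for t unfolding Hr_def HS_def using assms(5) by blast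
  have rt: "r t = rf (Hr t)" if "t \<in> {1..n}" for t
  proof -
    have "rf (Hr t) = sig \<alpha> (c + int t)" unfolding Hr_def by (rule rf_eq[OF assms(5)])
    moreover have "r t = aff_refl \<alpha> (of_int (c + int t))" using assms(6) that by blast
    ultimately show ?thesis by simp
  qed
  have rprep: "t \<le> n \<Longrightarrow> rep (rprod r t)" for t
  proof (induct t)
    case 0 thus ?case unfolding rep_def by (intro exI[of _ "[]"]) simp
  next
    case (Suc t)
    have "rep (r (Suc t))" using rt[of "Suc t"] rf_rep[OF HrHS] Suc(2) by simp
    moreover have "rep (rprod r t)" using Suc by simp
    ultimately have "rep (r (Suc t) \<circ> rprod r t)" by (rule rep_comp)
    thus ?case by (simp only: rprod.simps)
  qed
  define u where "u t = rprod r t \<circ> w \<circ> s" for t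
  have urep: "t \<le> n \<Longrightarrow> rep (u t)" for t
    unfolding u_def using rprep wrep rep_SR[OF sSR] rep_comp by blast
  have main: "t \<le> n \<Longrightarrow> L (u t \<circ> s) > L (u t)" for t
  proof (induct t)
    case 0
    have "u 0 \<circ> s = w" using ss by (simp add: u_def comp_assoc)
    moreover have "u 0 = w \<circ> s" by (simp add: u_def)
    ultimately show ?case using Lws by metis
  next
    case (Suc t)
    have t1: "Suc t \<in> {1..n}" using Suc(2) by simp
    have IH: "L (u t \<circ> s) > L (u t)" by (rule Suc(1)) (use Suc(2) in simp)
    have h: "L (u (Suc t)) = L (u t) + 1" "rprod r (Suc t) \<circ> w \<circ> s \<noteq> rprod r t \<circ> w"
    proof -
      have "L (rprod r (Suc t) \<circ> w \<circ> s) = L (rprod r (Suc t - 1) \<circ> w \<circ> s) + 1 \<and> rprod r (Suc t) \<circ> w \<circ> s \<noteq> rprod r (Suc t - 1) \<circ> w"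
        using assms(7) t1 by blast
      thus "L (u (Suc t)) = L (u t) + 1" "rprod r (Suc t) \<circ> w \<circ> s \<noteq> rprod r t \<circ> w"
        unfolding u_def diff_Suc_1 by blast+
    qed
    have uS: "u (Suc t) = r (Suc t) \<circ> u t" by (simp add: u_def comp_assoc)
    have uts: "u t \<circ> s = rprod r t \<circ> w" using ss by (simp add: u_def comp_assoc)
    have ne: "r (Suc t) \<circ> u t \<noteq> u t \<circ> s" using h(2) uS uts by (simp add: u_def)
    have "L (r (Suc t) \<circ> u t \<circ> s) > L (r (Suc t) \<circ> u t)"
      by (rule step_main[OF urep sSR rt[OF t1] HrHS IH]) (use Suc(2) h(1) uS ne in auto)
    thus ?case by (simp only: uS)
  qed
  have "\<not> L (u n \<circ> s) < L (u n)" using main[of n] by simp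
  thus ?thesis unfolding rdesc_def u_def by simp
qed


end
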